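(* Let $N=\{1,\dots,n\}$ and let $F:2^N\to\mathbb{R}$ be quasi-submodular. Run the minimization procedure (described in the context) from $X_0=\emptyset$ and let $Q_+$ be its output, and from $X_0=N$ and let $S_+$ be its output. Then every local minimum $P$ of $F$ satisfies $Q_+\subseteq P\subseteq S_+$.
   Context: For $A\subseteq N$ and $i\in N$, write $A+i=A\cup\{i\}$, $A-i=A\setminus\{i\}$, and $F(i\mid A)=F(A+i)-F(A)$. $F$ is quasi-submodular if for all $X,Y\subseteq N$ both hold: $F(X\cap Y)\ge F(X)\Rightarrow F(Y)\ge F(X\cup Y)$, and $F(X\cap Y)>F(X)\Rightarrow F(Y)>F(X\cup Y)$. A set $X\subseteq N$ is a local minimum of $F$ if $F(X-i)\ge F(X)$ for all $i\in X$ and $F(X+j)\ge F(X)$ for all $j\in N\setminus X$. Minimization procedure: given $X_0\subseteq N$, for $t=0,1,2,\dots$: let $U_t=\{u\in N\setminus X_t: F(u\mid X_t)<0\}$ and $Y_t=X_t\cup U_t$; let $D_t=\{d\in X_t: F(d\mid Y_t-d)>0\}$ and $X_{t+1}=Y_t\setminus D_t$; if $X_{t+1}=X_t$, stop and output $X_t$; otherwise continue with $t+1$. *)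

theory Defs
  imports Complex_Main
begin

definition marg :: "(nat set \<Rightarrow> real) \<Rightarrow> nat \<Rightarrow> nat set \<Rightarrow> real" where
  "marg F i A = F (insert i A) - F A"

definition quasi_submodular :: "nat set \<Rightarrow> (nat set \<Rightarrow> real) \<Rightarrow> bool" where
  "quasi_submodular N F \<longleftrightarrow>
     (\<forall>X Y. X \<subseteq> N \<longrightarrow> Y \<subseteq> N \<longrightarrow>
        (F (X \<inter> Y) \<ge> F X \<longrightarrow> F Y \<ge> F (X \<union> Y)) \<and>
        (F (X \<inter> Y) > F X \<longrightarrow> F Y > F (X \<union> Y)))"

definition local_min :: "nat set \<Rightarrow> (nat set \<Rightarrow> real) \<Rightarrow> nat set \<Rightarrow> bool" where
  "local_min N F X \<longleftrightarrow> X \<subseteq> N \<and>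
     (\<forall>i\<in>X. F (X - {i}) \<ge> F X) \<and> (\<forall>j\<in>N - X. F (insert j X) \<ge> F X)"

definition min_step :: "nat set \<Rightarrow> (nat set \<Rightarrow> real) \<Rightarrow> nat set \<Rightarrow> nat set" where
  "min_step N F X =
     (let U = {u \<in> N - X. marg F u X < 0};
          Y = X \<union> U;
          D = {d \<in> X. marg F d (Y - {d}) > 0}
      in Y - D)"

definition min_iter :: "nat set \<Rightarrow> (nat set \<Rightarrow> real) \<Rightarrow> nat set \<Rightarrow> nat \<Rightarrow> nat set" where
  "min_iter N F X0 t = (min_step N F ^^ t) X0"

definition min_output :: "nat set \<Rightarrow> (nat set \<Rightarrow> real) \<Rightarrow> nat set \<Rightarrow> nat set \<Rightarrow> bool" where
  "min_output N F X0 Q \<longleftrightarrow>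
     (\<exists>t. min_iter N F X0 (Suc t) = min_iter N F X0 t \<and>
          (\<forall>s<t. min_iter N F X0 (Suc s) \<noteq> min_iter N F X0 s) \<and>
          Q = min_iter N F X0 t)"

end

theory Submission
  imports Defs
begin

lemma step_sub: "X \<subseteq> N \<Longrightarrow> min_step N F X \<subseteq> N"
  unfolding min_step_def Let_def by auto

lemma step_low:
  assumes q: "quasi_submodular N F" and lm: "local_min N F P" and X: "X \<subseteq> N" and XP: "X \<subseteq> P"
  shows "min_step N F X \<subseteq> P"
proof
  fix x assume "x \<in> min_step N F X"
  hence "x \<in> X \<or> (x \<in> N - X \<and> marg F x X < 0)" unfolding min_step_def Let_def by auto
  thus "x \<in> P"
  proof
    assume h: "x \<in> N - X \<and> marg F x X < 0"
    show "x \<in> P"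
    proof (rule ccontr)
      assume nP: "x \<notin> P"
      have PN: "P \<subseteq> N" using lm unfolding local_min_def by auto
      have i: "insert x X \<inter> P = X" using nP XP by auto
      have u: "insert x X \<union> P = insert x P" using XP by auto
      have "F (insert x X \<inter> P) > F (insert x X)" using h i unfolding marg_def by auto
      moreover have "insert x X \<subseteq> N" using X h by auto
      ultimately have "F P > F (insert x X \<union> P)" using q PN unfolding quasi_submodular_def by blast
      moreover have "F (insert x P) \<ge> F P" using lm h nP unfolding local_min_def by auto
      ultimately show False using u by auto
    qed
  qed (use XP in auto)
qed

lemma step_up:
  assumes q: "quasi_submodular N F" and lm: "local_min N F P" and X: "X \<subseteq> N" and XP: "P \<subseteq> X"
  shows "P \<subseteq> min_step N F X"
proof
  fix d assume dP: "d \<in> P"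
  define Y where "Y = X \<union> {u \<in> N - X. marg F u X < 0}"
  have YN: "Y \<subseteq> N" using X unfolding Y_def by auto
  have PY: "P \<subseteq> Y" using XP unfolding Y_def by auto
  have dX: "d \<in> X" using XP dP by auto
  have "\<not> marg F d (Y - {d}) > 0"
  proof
    assume "marg F d (Y - {d}) > 0"
    hence g: "F Y > F (Y - {d})" using PY dP unfolding marg_def
      by (metis diff_gt_0_iff_gt insert_Diff subsetD)
    have "F (P - {d}) \<ge> F P" using lm dP unfolding local_min_def by auto
    moreover have "P \<inter> (Y - {d}) = P - {d}" "P \<union> (Y - {d}) = Y" using PY dP by auto
    moreover have "P \<subseteq> N" "Y - {d} \<subseteq> N" using YN PY by auto
    ultimately have "F (Y - {d}) \<ge> F Y" using q unfolding quasi_submodular_def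
      by (metis (no_types, lifting))
    thus False using g by auto
  qed
  thus "d \<in> min_step N F X" using dX unfolding min_step_def Let_def Y_def by auto
qed

lemma iter_sub: "X0 \<subseteq> N \<Longrightarrow> min_iter N F X0 t \<subseteq> N"
  by (induction t) (auto simp: min_iter_def intro: step_sub[THEN subsetD])

lemma iter_low:
  assumes "quasi_submodular N F" "local_min N F P"
  shows "min_iter N F {} t \<subseteq> P"
proof (induction t)
  case (Suc t)
  have "min_iter N F {} (Suc t) = min_step N F (min_iter N F {} t)" by (simp add: min_iter_def)
  thus ?case using step_low[OF assms iter_sub Suc] by simp
qed (simp add: min_iter_def)

lemma iter_up:
  assumes "quasi_submodular N F" "local_min N F P"
  shows "P \<subseteq> min_iter N F N t"
proof (induction t)
  case (Suc t)
  have "min_iter N F N (Suc t) = min_step N F (min_iter N F N t)" by (simp add: min_iter_def)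
  thus ?case using step_up[OF assms iter_sub Suc] by simp
qed (use assms in \<open>simp add: min_iter_def local_min_def\<close>)

theorem lemma3:
  fixes n :: nat and F :: "nat set \<Rightarrow> real" and Qp Sp P :: "nat set"
  assumes "quasi_submodular {1..n} F"
    and "min_output {1..n} F {} Qp"
    and "min_output {1..n} F {1..n} Sp"
    and "local_min {1..n} F P"
  shows "Qp \<subseteq> P \<and> P \<subseteq> Sp"
proof -
  obtain t where "Qp = min_iter {1..n} F {} t" using assms(2) unfolding min_output_def by blast
  moreover obtain s where "Sp = min_iter {1..n} F {1..n} s" using assms(3) unfolding min_output_def by blast
  ultimately show ?thesis using iter_low[OF assms(1,4)] iter_up[OF assms(1,4)] by simp
qed

end
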